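(* Let $R$ be a commutative ring and $Q$ an ordered quiver with vertex set $Q_0=\{1,\dots,n\}$. Let $\Lambda$ be the incidence $R$-algebra of $Q$, regarded as the $R$-subalgebra $\Lambda=\bigoplus_{a\ge b}R\,E_{ba}\subseteq\mathrm{M}_n(R)$. Then $H^i(\Lambda,\mathrm{M}_n(R)/\Lambda)=0$ for all $i\ge 0$.
   Context: A finite quiver $Q$ without oriented cycles is ordered if for each arrow $\alpha$ there is no oriented path other than $\alpha$ from the tail $t(\alpha)$ to the head $h(\alpha)$. On $Q_0$ set $a\ge b$ if $a=b$ or there is an oriented path from $a$ to $b$; this is a partial order. The incidence algebra is $RQ/I$ where $I$ is generated by differences of oriented paths with the same head and tail; it is $R$-free with basis the classes $e_{ba}$ ($a\ge b$) of paths from $a$ to $b$, and $e_{ba}\mapsto E_{ba}$ (matrix unit) identifies it with $\bigoplus_{a\ge b}RE_{ba}\subseteq\mathrm{M}_n(R)$. $H^i$ is Hochschild cohomology ($\mathrm{Ext}$ over $\Lambda\otimes_R\Lambda^{op}$), with $\mathrm{M}_n(R)/\Lambda$ a $\Lambda$-bimodule via matrix multiplication. *)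

theory Defs
  imports Main
begin

(* n x n matrices over R with rows/columns indexed by the vertices 1..n,
   represented as functions vanishing outside {1..n} x {1..n}. *)
type_synonym 'a mat = "nat \<Rightarrow> nat \<Rightarrow> 'a"

definition mats :: "nat \<Rightarrow> 'a::zero mat set" where
  "mats n = {X. \<forall>i j. (i \<notin> {1..n} \<or> j \<notin> {1..n}) \<longrightarrow> X i j = 0}"

definition mmul :: "nat \<Rightarrow> 'a::comm_ring_1 mat \<Rightarrow> 'a mat \<Rightarrow> 'a mat" where
  "mmul n X Y = (\<lambda>i j. \<Sum>k\<in>{1..n}. X i k * Y k j)"

definition madd :: "'a::comm_ring_1 mat \<Rightarrow> 'a mat \<Rightarrow> 'a mat" where
  "madd X Y = (\<lambda>i j. X i j + Y i j)"

definition msmult :: "'a::comm_ring_1 \<Rightarrow> 'a mat \<Rightarrow> 'a mat" where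
  "msmult c X = (\<lambda>i j. c * X i j)"

(* Quivers: arrows Arr, tail t, head h. qpath a ps b: ps is an oriented path from a to b. *)
fun qpath :: "'q set \<Rightarrow> ('q \<Rightarrow> nat) \<Rightarrow> ('q \<Rightarrow> nat) \<Rightarrow> nat \<Rightarrow> 'q list \<Rightarrow> nat \<Rightarrow> bool" where
  "qpath Arr t h a [] b = (a = b)"
| "qpath Arr t h a (x # xs) b = (x \<in> Arr \<and> t x = a \<and> qpath Arr t h (h x) xs b)"

definition ordered_quiver :: "nat \<Rightarrow> 'q set \<Rightarrow> ('q \<Rightarrow> nat) \<Rightarrow> ('q \<Rightarrow> nat) \<Rightarrow> bool" where
  "ordered_quiver n Arr t h \<longleftrightarrow>
     finite Arr
   \<and> (\<forall>x\<in>Arr. t x \<in> {1..n} \<and> h x \<in> {1..n})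
   \<and> (\<forall>a ps. qpath Arr t h a ps a \<longrightarrow> ps = [])
   \<and> (\<forall>x\<in>Arr. \<forall>ps. qpath Arr t h (t x) ps (h x) \<longrightarrow> ps = [x])"

definition qgeq :: "'q set \<Rightarrow> ('q \<Rightarrow> nat) \<Rightarrow> ('q \<Rightarrow> nat) \<Rightarrow> nat \<Rightarrow> nat \<Rightarrow> bool" where
  "qgeq Arr t h a b \<longleftrightarrow> (\<exists>ps. qpath Arr t h a ps b)"

(* incidence algebra: span of E_ba (row b, column a) with a \<ge> b *)
definition incidence_alg :: "nat \<Rightarrow> 'q set \<Rightarrow> ('q \<Rightarrow> nat) \<Rightarrow> ('q \<Rightarrow> nat) \<Rightarrow> 'a::comm_ring_1 mat set" where
  "incidence_alg n Arr t h = {X \<in> mats n. \<forall>b a. X b a \<noteq> 0 \<longrightarrow> qgeq Arr t h a b}"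

(* Concrete model of the quotient bimodule M_n(R)/Lambda: matrices supported on the
   positions (b,a) with not (a \<ge> b); the class of X corresponds to qproj X. *)
definition qproj :: "nat \<Rightarrow> 'q set \<Rightarrow> ('q \<Rightarrow> nat) \<Rightarrow> ('q \<Rightarrow> nat) \<Rightarrow> 'a::comm_ring_1 mat \<Rightarrow> 'a mat" where
  "qproj n Arr t h X = (\<lambda>b a. if b \<in> {1..n} \<and> a \<in> {1..n} \<and> \<not> qgeq Arr t h a b then X b a else 0)"

definition quot_mod :: "nat \<Rightarrow> 'q set \<Rightarrow> ('q \<Rightarrow> nat) \<Rightarrow> ('q \<Rightarrow> nat) \<Rightarrow> 'a::comm_ring_1 mat set" where
  "quot_mod n Arr t h = {X. qproj n Arr t h X = X}"

definition lact where "lact n Arr t h L M = qproj n Arr t h (mmul n L M)"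
definition ract where "ract n Arr t h M L = qproj n Arr t h (mmul n M L)"

(* Hochschild i-cochains: R-multilinear maps Lambda^i \<rightarrow> M_n(R)/Lambda (arguments as lists) *)
definition hcochain :: "nat \<Rightarrow> 'q set \<Rightarrow> ('q \<Rightarrow> nat) \<Rightarrow> ('q \<Rightarrow> nat) \<Rightarrow> nat
     \<Rightarrow> ('a::comm_ring_1 mat list \<Rightarrow> 'a mat) \<Rightarrow> bool" where
  "hcochain n Arr t h i f \<longleftrightarrow>
     (\<forall>xs\<in>lists (incidence_alg n Arr t h). length xs = i \<longrightarrow> f xs \<in> quot_mod n Arr t h)
   \<and> (\<forall>xs\<in>lists (incidence_alg n Arr t h). length xs = i \<longrightarrow>
        (\<forall>k<i. \<forall>x\<in>incidence_alg n Arr t h. \<forall>y\<in>incidence_alg n Arr t h. \<forall>c.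
           f (xs[k := madd (msmult c x) y]) = madd (msmult c (f (xs[k := x]))) (f (xs[k := y]))))"

(* Hochschild differential C^i \<rightarrow> C^(i+1), applied to a list xs of length i+1 *)
definition hdiff :: "nat \<Rightarrow> 'q set \<Rightarrow> ('q \<Rightarrow> nat) \<Rightarrow> ('q \<Rightarrow> nat) \<Rightarrow> nat
     \<Rightarrow> ('a::comm_ring_1 mat list \<Rightarrow> 'a mat) \<Rightarrow> 'a mat list \<Rightarrow> 'a mat" where
  "hdiff n Arr t h i f xs = (\<lambda>r s.
       lact n Arr t h (xs ! 0) (f (drop 1 xs)) r s
     + (\<Sum>k\<in>{1..i}. (-1) ^ k * f (take (k - 1) xs @ [mmul n (xs ! (k - 1)) (xs ! k)] @ drop (k + 1) xs) r s)
     + (-1) ^ (i + 1) * ract n Arr t h (f (take i xs)) (xs ! i) r s)"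

definition hochschild_vanishes :: "nat \<Rightarrow> 'q set \<Rightarrow> ('q \<Rightarrow> nat) \<Rightarrow> ('q \<Rightarrow> nat) \<Rightarrow> nat
     \<Rightarrow> 'a::comm_ring_1 itself \<Rightarrow> bool" where
  "hochschild_vanishes n Arr t h i _ \<longleftrightarrow>
     (\<forall>f :: 'a mat list \<Rightarrow> 'a mat.
        hcochain n Arr t h i f
      \<and> (\<forall>xs\<in>lists (incidence_alg n Arr t h). length xs = Suc i \<longrightarrow> hdiff n Arr t h i f xs = (\<lambda>_ _. 0))
      \<longrightarrow> (if i = 0 then f [] = (\<lambda>_ _. 0)
           else (\<exists>g. hcochain n Arr t h (i - 1) g
                   \<and> (\<forall>xs\<in>lists (incidence_alg n Arr t h). length xs = i \<longrightarrow> hdiff n Arr t h (i - 1) g xs = f xs))))"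

end

theory Submission
  imports Defs "HOL-Library.Function_Algebras"
begin

lemma sum_mat_apply: "(sum F D) i j = (\<Sum>d\<in>D. F d i j)" for F :: "'b \<Rightarrow> 'a::comm_monoid_add mat"
  by (induction D rule: infinite_finite_induct) auto

lemma minus_mat_apply: "(X - Y) i j = X i j - Y i j" for X Y :: "'a::ab_group_add mat"
  by simp

lemma fold_plus[simp]: "(\<lambda>a b. X a b + Y a b) = X + (Y::'a::ab_group_add mat)" by (simp add: fun_eq_iff)
lemma fold_minus[simp]: "(\<lambda>a b. X a b - Y a b) = X - (Y::'a::ab_group_add mat)" by (simp add: fun_eq_iff)
lemma fold_uminus[simp]: "(\<lambda>a b. - Y a b) = - (Y::'a::ab_group_add mat)" by (simp add: fun_eq_iff)
lemma fold_zero[simp]: "(\<lambda>a b. 0) = (0::'a::zero mat)" by (simp add: fun_eq_iff)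

definition Eu :: "nat \<Rightarrow> 'a::comm_ring_1 mat" where
  "Eu c = (\<lambda>i j. if i = c \<and> j = c then 1 else 0)"

lemma qpath_append: "qpath Arr t h a ps b \<Longrightarrow> qpath Arr t h b qs c \<Longrightarrow> qpath Arr t h a (ps @ qs) c"
  by (induction ps arbitrary: a) auto

locale iq = fixes n :: nat and Arr :: "'q set" and t h :: "'q \<Rightarrow> nat"
begin

abbreviation "ge \<equiv> qgeq Arr t h"
abbreviation "P \<equiv> qproj n Arr t h"
abbreviation "la \<equiv> lact n Arr t h"
abbreviation "ra \<equiv> ract n Arr t h"
abbreviation "mm \<equiv> mmul n"

lemma ge_refl: "ge a a"
  unfolding qgeq_def by (rule exI[of _ "[]"]) simp

lemma ge_trans: "ge a b \<Longrightarrow> ge b c \<Longrightarrow> ge a c"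
  unfolding qgeq_def using qpath_append by blast

lemma mm_assoc: "mm (mm X Y) Z = mm X (mm Y Z)"
  unfolding mmul_def
  by (auto simp: fun_eq_iff sum_distrib_left sum_distrib_right mult.assoc intro: sum.swap)

lemma Eu_A: "c \<in> {1..n} \<Longrightarrow> Eu c \<in> incidence_alg n Arr t h"
  unfolding incidence_alg_def mats_def Eu_def by (auto simp: ge_refl)

lemma A_mats: "X \<in> incidence_alg n Arr t h \<Longrightarrow> i \<notin> {1..n} \<or> j \<notin> {1..n} \<Longrightarrow> X i j = 0"
  unfolding incidence_alg_def mats_def by auto

lemma A_ge: "X \<in> incidence_alg n Arr t h \<Longrightarrow> X b a \<noteq> 0 \<Longrightarrow> ge a b"
  unfolding incidence_alg_def by auto

lemma A_I: "(\<And>i j. i \<notin> {1..n} \<or> j \<notin> {1..n} \<Longrightarrow> X i j = 0) \<Longrightarrow> (\<And>b a. X b a \<noteq> 0 \<Longrightarrow> ge a b)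
   \<Longrightarrow> X \<in> incidence_alg n Arr t h"
  unfolding incidence_alg_def mats_def by auto

lemma mm_A: assumes "X \<in> incidence_alg n Arr t h" "Y \<in> incidence_alg n Arr t h"
  shows "mm X Y \<in> incidence_alg n Arr t h"
proof (rule A_I)
  fix i j :: nat assume "i \<notin> {1..n} \<or> j \<notin> {1..n}"
  then show "mm X Y i j = 0" unfolding mmul_def using A_mats[OF assms(1)] A_mats[OF assms(2)]
    by (auto intro!: sum.neutral)
next
  fix b a assume "mm X Y b a \<noteq> 0"
  then obtain k where "X b k * Y k a \<noteq> 0" unfolding mmul_def by (meson sum.neutral)
  then have "X b k \<noteq> 0" "Y k a \<noteq> 0" by auto
  then show "ge a b" using A_ge[OF assms(1)] A_ge[OF assms(2)] ge_trans by blast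
qed

lemma zero_A: "0 \<in> incidence_alg n Arr t h"
  by (rule A_I) auto

lemma madd_A: "X \<in> incidence_alg n Arr t h \<Longrightarrow> Y \<in> incidence_alg n Arr t h \<Longrightarrow> madd (msmult c X) Y \<in> incidence_alg n Arr t h"
proof (rule A_I)
  fix i j :: nat assume "i \<notin> {1..n} \<or> j \<notin> {1..n}" "X \<in> incidence_alg n Arr t h" "Y \<in> incidence_alg n Arr t h"
  then show "madd (msmult c X) Y i j = 0" using A_mats[of X] A_mats[of Y] by (auto simp: madd_def msmult_def)
next
  fix b a assume "madd (msmult c X) Y b a \<noteq> 0" "X \<in> incidence_alg n Arr t h" "Y \<in> incidence_alg n Arr t h"
  then have "X b a \<noteq> 0 \<or> Y b a \<noteq> 0" by (auto simp: madd_def msmult_def)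
  then show "ge a b" using A_ge[of X] A_ge[of Y] \<open>X \<in> _\<close> \<open>Y \<in> _\<close> by blast
qed

lemma add_A: "X \<in> incidence_alg n Arr t h \<Longrightarrow> Y \<in> incidence_alg n Arr t h \<Longrightarrow> X + Y \<in> incidence_alg n Arr t h"
proof -
  have "madd (msmult 1 X) Y = X + Y" by (simp add: fun_eq_iff madd_def msmult_def)
  then show "X \<in> incidence_alg n Arr t h \<Longrightarrow> Y \<in> incidence_alg n Arr t h \<Longrightarrow> X + Y \<in> incidence_alg n Arr t h"
    using madd_A[of X Y 1] by simp
qed

lemma sum_A: "(\<And>d. d \<in> S \<Longrightarrow> Y d \<in> incidence_alg n Arr t h) \<Longrightarrow> sum Y S \<in> incidence_alg n Arr t h"
  by (induction S rule: infinite_finite_induct) (auto simp: zero_A add_A)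

lemma mm_Eu_left: assumes "c \<in> {1..n}" shows "mm (Eu c) X = (\<lambda>i j. if i = c then X c j else 0)"
proof -
  have "(\<Sum>k\<in>{1..n}. Eu c i k * X k j) = (if i = c then X c j else 0)" for i j
  proof -
    have "(\<Sum>k\<in>{1..n}. Eu c i k * X k j) = (\<Sum>k\<in>{1..n}. if k = c then (if i = c then X c j else 0) else 0)"
      by (rule sum.cong) (auto simp: Eu_def)
    also have "\<dots> = (if i = c then X c j else 0)" using assms by (simp add: sum.delta)
    finally show ?thesis .
  qed
  then show ?thesis unfolding mmul_def by (simp add: fun_eq_iff)
qed

lemma mm_Eu_right: assumes "c \<in> {1..n}" shows "mm X (Eu c) = (\<lambda>i j. if j = c then X i c else 0)"
proof -
  have "(\<Sum>k\<in>{1..n}. X i k * Eu c k j) = (if j = c then X i c else 0)" for i j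
  proof -
    have "(\<Sum>k\<in>{1..n}. X i k * Eu c k j) = (\<Sum>k\<in>{1..n}. if k = c then (if j = c then X i c else 0) else 0)"
      by (rule sum.cong) (auto simp: Eu_def)
    also have "\<dots> = (if j = c then X i c else 0)" using assms by (simp add: sum.delta)
    finally show ?thesis .
  qed
  then show ?thesis unfolding mmul_def by (simp add: fun_eq_iff)
qed

lemma P_apply: "P X i j = (if i \<in> {1..n} \<and> j \<in> {1..n} \<and> \<not> ge j i then X i j else 0)"
  unfolding qproj_def by simp

lemma P_mm_P_left: assumes "w \<in> incidence_alg n Arr t h" shows "P (mm w (P Y)) = P (mm w Y)"
proof -
  have "P (mm w (P Y)) i j = P (mm w Y) i j" for i j
  proof (cases "i \<in> {1..n} \<and> j \<in> {1..n} \<and> \<not> ge j i")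
    case True
    have "w i k * P Y k j = w i k * Y k j" if "k \<in> {1..n}" for k
    proof (cases "w i k = 0")
      case False
      then have "ge k i" using A_ge[OF assms] by blast
      then have "\<not> ge j k" using True ge_trans by blast
      then show ?thesis using True that by (simp add: P_apply)
    qed simp
    then show ?thesis using True by (simp add: P_apply mmul_def)
  qed (auto simp: qproj_def)
  then show ?thesis by (simp add: fun_eq_iff)
qed

lemma P_mm_P_right: assumes "w \<in> incidence_alg n Arr t h" shows "P (mm (P Y) w) = P (mm Y w)"
proof -
  have "P (mm (P Y) w) i j = P (mm Y w) i j" for i j
  proof (cases "i \<in> {1..n} \<and> j \<in> {1..n} \<and> \<not> ge j i")
    case True
    have "P Y i k * w k j = Y i k * w k j" if "k \<in> {1..n}" for k
    proof (cases "w k j = 0")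
      case False
      then have "ge j k" using A_ge[OF assms] by blast
      then have "\<not> ge k i" using True ge_trans by blast
      then show ?thesis using True that by (simp add: P_apply)
    qed simp
    then show ?thesis using True by (simp add: P_apply mmul_def)
  qed (auto simp: qproj_def)
  then show ?thesis by (simp add: fun_eq_iff)
qed

lemma la_la: "a \<in> incidence_alg n Arr t h \<Longrightarrow> la a (la b m) = la (mm a b) m"
  unfolding lact_def by (simp add: P_mm_P_left mm_assoc)

lemma ra_ra: "b \<in> incidence_alg n Arr t h \<Longrightarrow> ra (ra m a) b = ra m (mm a b)"
  unfolding ract_def by (simp add: P_mm_P_right mm_assoc)

lemma la_ra: "a \<in> incidence_alg n Arr t h \<Longrightarrow> b \<in> incidence_alg n Arr t h \<Longrightarrow> la a (ra m b) = ra (la a m) b"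
  unfolding lact_def ract_def by (simp add: P_mm_P_left P_mm_P_right mm_assoc)

lemma P_P: "P (P X) = P X"
  by (simp add: fun_eq_iff P_apply)

lemma P_add: "P (X + Y) = P X + P Y"
  by (simp add: fun_eq_iff P_apply)
lemma P_minus: "P (X - Y) = P X - P Y"
  by (simp add: fun_eq_iff P_apply)
lemma P_uminus: "P (- X) = - P X"
  by (simp add: fun_eq_iff P_apply)
lemma P_zero: "P 0 = 0"
  by (simp add: fun_eq_iff P_apply)
lemma P_sum: "P (sum F S) = (\<Sum>d\<in>S. P (F d))"
proof (induction S rule: infinite_finite_induct)
  case (insert x S') then show ?case by (simp only: sum.insert[OF insert(1,2)] P_add insert(3))
next
  case (infinite S') then show ?case by (metis sum.infinite P_zero)
qed (simp only: sum.empty P_zero)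
lemma P_madd: "P (madd (msmult c X) Y) = madd (msmult c (P X)) (P Y)"
  by (simp add: fun_eq_iff P_apply madd_def msmult_def)

lemma mm_add_right: "mm X (Y + Z) = mm X Y + mm X Z"
  by (simp add: fun_eq_iff mmul_def distrib_left sum.distrib)
lemma mm_add_left: "mm (X + Y) Z = mm X Z + mm Y Z"
  by (simp add: fun_eq_iff mmul_def distrib_right sum.distrib)
lemma mm_minus_right: "mm X (Y - Z) = mm X Y - mm X Z"
  by (simp add: fun_eq_iff mmul_def right_diff_distrib sum_subtractf)
lemma mm_minus_left: "mm (X - Y) Z = mm X Z - mm Y Z"
  by (simp add: fun_eq_iff mmul_def left_diff_distrib sum_subtractf)
lemma mm_uminus_right: "mm X (- Y) = - mm X Y"
  by (simp add: fun_eq_iff mmul_def sum_negf)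
lemma mm_uminus_left: "mm (- X) Y = - mm X Y"
  by (simp add: fun_eq_iff mmul_def sum_negf)
lemma mm_zero_right: "mm X 0 = 0"
  by (simp add: fun_eq_iff mmul_def)
lemma mm_zero_left: "mm 0 X = 0"
  by (simp add: fun_eq_iff mmul_def)
lemma mm_sum_right: "mm X (sum F S) = (\<Sum>d\<in>S. mm X (F d))"
proof (induction S rule: infinite_finite_induct)
  case (insert x S') then show ?case by (simp only: sum.insert[OF insert(1,2)] mm_add_right insert(3))
next
  case (infinite S') then show ?case by (metis sum.infinite mm_zero_right)
qed (simp only: sum.empty mm_zero_right)
lemma mm_sum_left: "mm (sum F S) X = (\<Sum>d\<in>S. mm (F d) X)"
proof (induction S rule: infinite_finite_induct)
  case (insert x S') then show ?case by (simp only: sum.insert[OF insert(1,2)] mm_add_left insert(3))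
next
  case (infinite S') then show ?case by (metis sum.infinite mm_zero_left)
qed (simp only: sum.empty mm_zero_left)
lemma mm_madd_right: "mm X (madd (msmult c Y) Z) = madd (msmult c (mm X Y)) (mm X Z)"
  by (simp add: fun_eq_iff mmul_def madd_def msmult_def distrib_left sum.distrib sum_distrib_left algebra_simps)
lemma mm_madd_left: "mm (madd (msmult c Y) Z) X = madd (msmult c (mm Y X)) (mm Z X)"
  by (simp add: fun_eq_iff mmul_def madd_def msmult_def distrib_right sum.distrib sum_distrib_left algebra_simps)

lemmas la_lin = mm_add_right mm_minus_right mm_uminus_right mm_zero_right mm_sum_right mm_madd_right
   P_add P_minus P_uminus P_zero P_sum P_madd

lemma la_add: "la w (X + Y) = la w X + la w Y" by (simp add: lact_def la_lin)
lemma la_minus: "la w (X - Y) = la w X - la w Y" by (simp add: lact_def la_lin)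
lemma la_uminus: "la w (- Y) = - la w Y" by (simp add: lact_def la_lin)
lemma la_zero: "la w 0 = 0" by (simp add: lact_def la_lin)
lemma la_sum: "la w (sum F S) = (\<Sum>d\<in>S. la w (F d))" by (simp add: lact_def la_lin)
lemma la_madd: "la w (madd (msmult c X) Y) = madd (msmult c (la w X)) (la w Y)" by (simp add: lact_def la_lin)
lemma ra_add: "ra (X + Y) w = ra X w + ra Y w" by (simp add: ract_def mm_add_left P_add)
lemma ra_minus: "ra (X - Y) w = ra X w - ra Y w" by (simp add: ract_def mm_minus_left P_minus)
lemma ra_uminus: "ra (- Y) w = - ra Y w" by (simp add: ract_def mm_uminus_left P_uminus)
lemma ra_zero: "ra 0 w = 0" by (simp add: ract_def mm_zero_left P_zero)
lemma ra_sum: "ra (sum F S) w = (\<Sum>d\<in>S. ra (F d) w)" by (simp add: ract_def mm_sum_left P_sum)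
lemma la_sum_left: "la (sum F S) m = (\<Sum>d\<in>S. la (F d) m)" by (simp add: lact_def mm_sum_left P_sum)

fun K :: "nat \<Rightarrow> ('a::comm_ring_1 mat list \<Rightarrow> 'a mat) \<Rightarrow> 'a mat list \<Rightarrow> 'a mat" where
  "K c f [] = f [Eu c]"
| "K c f (y#ys) = f (Eu c # y # ys) - (\<Sum>d\<in>{1..n}. K d (\<lambda>ws. f (mmul n (mmul n (Eu c) y) (Eu d) # ws)) ys)"

fun D :: "('a::comm_ring_1 mat list \<Rightarrow> 'a mat) \<Rightarrow> 'a mat list \<Rightarrow> 'a mat" where
  "D f [] = 0"
| "D f [x] = - ract n Arr t h (f []) x"
| "D f (x#y#zs) = - f (mmul n x y # zs) - D (\<lambda>ws. f (x#ws)) (y#zs)"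

fun L :: "nat \<Rightarrow> ('a::comm_ring_1 mat list \<Rightarrow> 'a mat) \<Rightarrow> 'a mat list \<Rightarrow> 'a mat" where
  "L c f [] = ract n Arr t h (f []) (Eu c)"
| "L c f (x#xs) = (\<Sum>d\<in>{1..n}. L d (\<lambda>ws. f (mmul n (mmul n (Eu c) x) (Eu d) # ws)) xs)"

declare K.simps[simp del] D.simps[simp del] L.simps[simp del]

definition dd :: "('a::comm_ring_1 mat list \<Rightarrow> 'a mat) \<Rightarrow> 'a mat list \<Rightarrow> 'a mat" where
  "dd f xs = lact n Arr t h (hd xs) (f (tl xs)) + D f xs"

lemma madd_eq: "madd (msmult c X) Y = msmult c X + Y"
  by (simp add: fun_eq_iff madd_def msmult_def)

lemma msmult_add: "msmult c (X + Y) = msmult c X + msmult c Y"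
  by (simp add: fun_eq_iff msmult_def algebra_simps)
lemma msmult_minus: "msmult c (X - Y) = msmult c X - msmult c Y"
  by (simp add: fun_eq_iff msmult_def algebra_simps)
lemma msmult_uminus: "msmult c (- Y) = - msmult c Y"
  by (simp add: fun_eq_iff msmult_def algebra_simps)
lemma msmult_zero: "msmult c 0 = 0"
  by (simp add: fun_eq_iff msmult_def)
lemma msmult_sum: "msmult c (sum F S) = (\<Sum>d\<in>S. msmult c (F d))"
proof (induction S rule: infinite_finite_induct)
  case (insert x S') then show ?case by (simp only: sum.insert[OF insert(1,2)] msmult_add insert(3))
next
  case (infinite S') then show ?case by (metis sum.infinite msmult_zero)
qed (simp only: sum.empty msmult_zero)

lemma la_msmult: "la w (msmult c X) = msmult c (la w X)"
  using la_madd[of w c X 0] by (simp add: madd_eq la_zero)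
lemma ra_msmult: "ra (msmult c X) w = msmult c (ra X w)"
  using mm_madd_left[of c X 0 w] P_madd[of c "mm X w" 0] by (simp add: ract_def madd_eq mm_zero_left P_zero)

definition MLN :: "nat \<Rightarrow> ('a::comm_ring_1 mat list \<Rightarrow> 'a mat) \<Rightarrow> bool" where
  "MLN m f \<longleftrightarrow> (\<forall>xs\<in>lists (incidence_alg n Arr t h). length xs = m \<longrightarrow>
        (\<forall>k<m. \<forall>x\<in>incidence_alg n Arr t h. \<forall>y\<in>incidence_alg n Arr t h. \<forall>c.
           f (xs[k := madd (msmult c x) y]) = madd (msmult c (f (xs[k := x]))) (f (xs[k := y]))))"

lemma MLN_D: "MLN m f \<Longrightarrow> xs \<in> lists (incidence_alg n Arr t h) \<Longrightarrow> length xs = m \<Longrightarrow> k < m \<Longrightarrow>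
   x \<in> incidence_alg n Arr t h \<Longrightarrow> y \<in> incidence_alg n Arr t h \<Longrightarrow>
   f (xs[k := msmult c x + y]) = msmult c (f (xs[k := x])) + f (xs[k := y])"
  unfolding MLN_def madd_eq[symmetric] by blast

lemma MLN_zero: assumes "MLN m f" "xs \<in> lists (incidence_alg n Arr t h)" "length xs = m" "k < m"
  shows "f (xs[k := 0]) = 0"
proof -
  have "f (xs[k := msmult (-1) 0 + 0]) = msmult (-1) (f (xs[k := 0])) + f (xs[k := 0])"
    using MLN_D[OF assms, of 0 0 "-1"] zero_A by blast
  moreover have "msmult (-1) 0 + 0 = (0::'a mat)" by (simp add: fun_eq_iff msmult_def)
  ultimately show ?thesis by (simp add: fun_eq_iff msmult_def)
qed

lemma MLN_add: assumes "MLN m f" "xs \<in> lists (incidence_alg n Arr t h)" "length xs = m" "k < m"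
  "x \<in> incidence_alg n Arr t h" "y \<in> incidence_alg n Arr t h"
  shows "f (xs[k := x + y]) = f (xs[k := x]) + f (xs[k := y])"
  using MLN_D[OF assms, of 1] by (simp add: msmult_def)

lemma MLN_sum: assumes "MLN m f" "xs \<in> lists (incidence_alg n Arr t h)" "length xs = m" "k < m" "finite S"
  "\<And>d. d \<in> S \<Longrightarrow> Y d \<in> incidence_alg n Arr t h"
  shows "f (xs[k := sum Y S]) = (\<Sum>d\<in>S. f (xs[k := Y d]))"
  using assms(5,6)
proof (induction S rule: finite_induct)
  case empty then show ?case using MLN_zero[OF assms(1-4)] by simp
next
  case (insert x S')
  have "f (xs[k := sum Y (insert x S')]) = f (xs[k := Y x + sum Y S'])" using insert by simp
  also have "\<dots> = f (xs[k := Y x]) + f (xs[k := sum Y S'])"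
  proof (rule MLN_add[OF assms(1-4)])
    show "sum Y S' \<in> incidence_alg n Arr t h" by (rule sum_A) (use insert in auto)
  qed (use insert in auto)
  finally show ?case using insert by simp
qed

lemma MLN_cons: assumes "MLN (Suc m) f" "y \<in> incidence_alg n Arr t h" shows "MLN m (\<lambda>ws. f (y # ws))"
  unfolding MLN_def
proof (intro ballI impI allI)
  fix xs :: "'a mat list" and k :: nat and x z :: "'a mat" and c :: 'a
  assume "xs \<in> lists (incidence_alg n Arr t h)" "length xs = m" "k < m" "x \<in> incidence_alg n Arr t h" "z \<in> incidence_alg n Arr t h"
  then show "f (y # xs[k := madd (msmult c x) z]) = madd (msmult c (f (y # xs[k := x]))) (f (y # xs[k := z]))"
    using assms unfolding MLN_def
    by (metis (no_types, lifting) Cons_in_lists_iff Suc_less_eq length_Cons list_update_code(3))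
qed

lemma MLN_zero_mem: assumes "MLN m f" "xs \<in> lists (incidence_alg n Arr t h)" "length xs = m" "0 \<in> set xs"
  shows "f xs = 0"
proof -
  obtain k where k: "k < length xs" "xs ! k = 0" using assms(4) by (metis in_set_conv_nth)
  then have "xs[k := 0] = xs" using list_update_id[of xs k] by simp
  then show ?thesis using MLN_zero[OF assms(1-3), of k] k assms(3) by simp
qed

lemma K_cong_ne: "(\<And>w ws. f (w # ws) = g (w # ws)) \<Longrightarrow> K c f xs = K c g xs"
proof (induction xs arbitrary: c f g)
  case (Cons y ys)
  have "K d (\<lambda>ws. f (mm (mm (Eu c) y) (Eu d) # ws)) ys = K d (\<lambda>ws. g (mm (mm (Eu c) y) (Eu d) # ws)) ys" for d
    by (rule Cons.IH) (simp add: Cons.prems)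
  then show ?case by (simp only: K.simps Cons.prems)
qed (simp only: K.simps)

lemma K_cong: "(\<And>ws. ws \<in> lists (incidence_alg n Arr t h) \<Longrightarrow> length ws = Suc (length xs) \<Longrightarrow> f ws = g ws)
  \<Longrightarrow> xs \<in> lists (incidence_alg n Arr t h) \<Longrightarrow> c \<in> {1..n} \<Longrightarrow> K c f xs = K c g xs"
proof (induction xs arbitrary: c f g)
  case Nil
  have "[Eu c] \<in> lists (incidence_alg n Arr t h)" using Eu_A Nil.prems(3) by simp
  then show ?case using Nil.prems(1)[of "[Eu c]"] by (simp only: K.simps) simp
next
  case (Cons y ys)
  have yA: "y \<in> incidence_alg n Arr t h" using Cons by simp
  have "K d (\<lambda>ws. f (mm (mm (Eu c) y) (Eu d) # ws)) ys = K d (\<lambda>ws. g (mm (mm (Eu c) y) (Eu d) # ws)) ys"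
    if "d \<in> {1..n}" for d
  proof (rule Cons.IH)
    have YA: "mm (mm (Eu c) y) (Eu d) \<in> incidence_alg n Arr t h" using Cons.prems that yA by (intro mm_A Eu_A) auto
    fix ws :: "'a mat list" assume "ws \<in> lists (incidence_alg n Arr t h)" "length ws = Suc (length ys)"
    then show "f (mm (mm (Eu c) y) (Eu d) # ws) = g (mm (mm (Eu c) y) (Eu d) # ws)"
      using Cons.prems(1)[of "mm (mm (Eu c) y) (Eu d) # ws"] YA by simp
  qed (use Cons.prems that in auto)
  then have "(\<Sum>d\<in>{1..n}. K d (\<lambda>ws. f (mm (mm (Eu c) y) (Eu d) # ws)) ys) = (\<Sum>d\<in>{1..n}. K d (\<lambda>ws. g (mm (mm (Eu c) y) (Eu d) # ws)) ys)"
    by (intro sum.cong) auto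
  moreover have "f (Eu c # y # ys) = g (Eu c # y # ys)"
  proof (rule Cons.prems(1))
    show "Eu c # y # ys \<in> lists (incidence_alg n Arr t h)" using Cons.prems Eu_A yA by auto
  qed simp
  ultimately show ?case by (simp only: K.simps)
qed

lemma K_add: "K c (\<lambda>ws. f ws + g ws) xs = K c f xs + K c g xs"
proof (induction xs arbitrary: c f g)
  case Nil then show ?case by (simp only: K.simps)
next
  case (Cons y ys) then show ?case by (simp only: K.simps sum.distrib) (simp add: algebra_simps)
qed
lemma K_minus: "K c (\<lambda>ws. f ws - g ws) xs = K c f xs - K c g xs"
proof (induction xs arbitrary: c f g)
  case Nil then show ?case by (simp only: K.simps)
next
  case (Cons y ys) then show ?case by (simp only: K.simps sum_subtractf) (simp add: algebra_simps)
qed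
lemma K_zero: "K c (\<lambda>ws. 0) xs = 0"
proof (induction xs arbitrary: c)
  case Nil then show ?case by (simp only: K.simps)
next
  case (Cons y ys) then show ?case by (simp only: K.simps sum.neutral_const diff_zero)
qed
lemma K_sum: "K c (\<lambda>ws. \<Sum>e\<in>S. F e ws) xs = (\<Sum>e\<in>S. K c (F e) xs)"
proof (induction S rule: infinite_finite_induct)
  case (infinite A) then show ?case by (simp only: sum.infinite[OF infinite] K_zero)
next
  case empty then show ?case using K_zero by (simp only: sum.empty)
next
  case (insert x S') then show ?case using K_add[of c "F x" "\<lambda>ws. \<Sum>e\<in>S'. F e ws" xs]
    by (simp only: sum.insert[OF insert(1,2)])
qed
lemma K_la: "K c (\<lambda>ws. la w (f ws)) xs = la w (K c f xs)"
  by (induction xs arbitrary: c f) (simp_all only: K.simps la_sum la_minus)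
lemma K_msmult: "K c (\<lambda>ws. msmult a (f ws)) xs = msmult a (K c f xs)"
  by (induction xs arbitrary: c f) (simp_all only: K.simps msmult_sum msmult_minus)

lemma L_vanish: "(\<And>ws. ws \<in> lists (incidence_alg n Arr t h) \<Longrightarrow> length ws = length xs \<Longrightarrow> f ws = 0)
  \<Longrightarrow> xs \<in> lists (incidence_alg n Arr t h) \<Longrightarrow> c \<in> {1..n} \<Longrightarrow> L c f xs = 0"
proof (induction xs arbitrary: c f)
  case Nil then show ?case by (simp only: L.simps) (simp add: ra_zero)
next
  case (Cons y ys)
  have yA: "y \<in> incidence_alg n Arr t h" using Cons by simp
  have "L d (\<lambda>ws. f (mm (mm (Eu c) y) (Eu d) # ws)) ys = 0" if "d \<in> {1..n}" for d
  proof (rule Cons.IH)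
    have YA: "mm (mm (Eu c) y) (Eu d) \<in> incidence_alg n Arr t h" using Cons.prems that yA by (intro mm_A Eu_A) auto
    fix ws :: "'a mat list" assume "ws \<in> lists (incidence_alg n Arr t h)" "length ws = length ys"
    then show "f (mm (mm (Eu c) y) (Eu d) # ws) = 0" using Cons.prems(1)[of "mm (mm (Eu c) y) (Eu d) # ws"] YA by simp
  qed (use Cons.prems that in auto)
  then have "(\<Sum>d\<in>{1..n}. L d (\<lambda>ws. f (mm (mm (Eu c) y) (Eu d) # ws)) ys) = 0" by (intro sum.neutral) blast
  then show ?case by (simp only: L.simps)
qed

lemma D_minus: "D (\<lambda>ws. f ws - g ws) xs = D f xs - D g xs"
proof (induction xs arbitrary: f g rule: induct_list012)
  case (3 x y zs)
  have "D (\<lambda>ws. f (x#ws) - g (x#ws)) (y#zs) = D (\<lambda>ws. f (x#ws)) (y#zs) - D (\<lambda>ws. g (x#ws)) (y#zs)" by (rule 3(2))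
  then show ?case by (simp only: D.simps) (simp add: algebra_simps)
qed (simp_all only: D.simps ra_minus, simp_all)
lemma D_add: "D (\<lambda>ws. f ws + g ws) xs = D f xs + D g xs"
proof (induction xs arbitrary: f g rule: induct_list012)
  case (3 x y zs)
  have "D (\<lambda>ws. f (x#ws) + g (x#ws)) (y#zs) = D (\<lambda>ws. f (x#ws)) (y#zs) + D (\<lambda>ws. g (x#ws)) (y#zs)" by (rule 3(2))
  then show ?case by (simp only: D.simps) (simp add: algebra_simps)
qed (simp_all only: D.simps ra_add, simp_all)
lemma D_zero: "D (\<lambda>ws. 0) xs = 0"
proof (induction xs rule: induct_list012)
  case (3 x y zs)
  then show ?case by (simp only: D.simps) simp
qed (simp_all only: D.simps ra_zero, simp_all)
lemma D_sum: "D (\<lambda>ws. \<Sum>e\<in>S. F e ws) xs = (\<Sum>e\<in>S. D (F e) xs)"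
proof (induction S rule: infinite_finite_induct)
  case (infinite A) then show ?case by (simp only: sum.infinite[OF infinite] D_zero)
next
  case empty then show ?case using D_zero by (simp only: sum.empty)
next
  case (insert x S') then show ?case using D_add[of "F x" "\<lambda>ws. \<Sum>e\<in>S'. F e ws" xs]
    by (simp only: sum.insert[OF insert(1,2)])
qed
lemma D_la: "w \<in> incidence_alg n Arr t h \<Longrightarrow> xs \<in> lists (incidence_alg n Arr t h) \<Longrightarrow> D (\<lambda>ws. la w (f ws)) xs = la w (D f xs)"
proof (induction f xs rule: D.induct)
  case (1 f) show ?case by (simp only: D.simps la_zero)
next
  case (2 f x)
  have "x \<in> incidence_alg n Arr t h" using 2 by simp
  then show ?case by (simp only: D.simps la_uminus la_ra[OF 2(1)])
next
  case (3 f x y zs)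
  have "D (\<lambda>ws. la w (f (x#ws))) (y#zs) = la w (D (\<lambda>ws. f (x#ws)) (y#zs))" using 3 by simp
  then show ?case by (simp only: D.simps la_minus la_uminus)
qed

lemma dd_Cons: "dd f (x # xs) = la x (f xs) + D f (x # xs)"
  by (simp add: dd_def)

definition HH :: "('a::comm_ring_1 mat list \<Rightarrow> 'a mat) \<Rightarrow> 'a mat list \<Rightarrow> 'a mat" where
  "HH f ys = (\<Sum>c\<in>{1..n}. lact n Arr t h (Eu c) (K c f ys))"

end


context iq
begin

abbreviation Yd where "Yd c x d \<equiv> mm (mm (Eu c) x) (Eu d)"

lemma Eu_idem: "d \<in> {1..n} \<Longrightarrow> mm (Eu d) (Eu d) = Eu d"
  unfolding mm_Eu_left[of d "Eu d"] by (auto simp: fun_eq_iff Eu_def)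

lemma Yd_A: "c \<in> {1..n} \<Longrightarrow> d \<in> {1..n} \<Longrightarrow> x \<in> incidence_alg n Arr t h \<Longrightarrow> Yd c x d \<in> incidence_alg n Arr t h"
  by (intro mm_A Eu_A)

lemma Yd_Eu: "d \<in> {1..n} \<Longrightarrow> mm (mm X (Eu d)) (Eu d) = mm X (Eu d)"
  by (simp add: mm_assoc Eu_idem)

lemma sum_mm_Eu: assumes "X \<in> incidence_alg n Arr t h" shows "(\<Sum>d\<in>{1..n}. mm X (Eu d)) = X"
proof -
  have "(\<Sum>d\<in>{1..n}. mm X (Eu d)) i j = X i j" for i j
  proof -
    have "(\<Sum>d\<in>{1..n}. mm X (Eu d)) i j = (\<Sum>d\<in>{1..n}. if j = d then X i d else 0)"
      by (simp add: sum_mat_apply mm_Eu_right)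
    also have "\<dots> = (if j \<in> {1..n} then X i j else 0)"
      by (simp add: sum.delta)
    also have "\<dots> = X i j" using A_mats[OF assms] by auto
    finally show ?thesis .
  qed
  then show ?thesis by (simp add: fun_eq_iff)
qed

lemma sum_Yd: "c \<in> {1..n} \<Longrightarrow> x \<in> incidence_alg n Arr t h \<Longrightarrow> (\<Sum>d\<in>{1..n}. Yd c x d) = mm (Eu c) x"
  by (rule sum_mm_Eu) (intro mm_A Eu_A)

lemma sum_YY: assumes "c \<in> {1..n}" "x \<in> incidence_alg n Arr t h"
  shows "(\<Sum>d\<in>{1..n}. mm (Yd c x d) (Yd d z e)) = Yd c (mm x z) e"
proof -
  have "mm (Yd c x d) (Yd d z e) = mm (mm (mm (Eu c) x) (Eu d)) (mm z (Eu e))" if "d \<in> {1..n}" for d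
    using that by (simp add: mm_assoc Eu_idem flip: mm_assoc[of "Eu d" "Eu d"])
  then have "(\<Sum>d\<in>{1..n}. mm (Yd c x d) (Yd d z e)) = (\<Sum>d\<in>{1..n}. mm (mm (mm (Eu c) x) (Eu d)) (mm z (Eu e)))"
    by (rule sum.cong[OF refl])
  also have "\<dots> = mm (\<Sum>d\<in>{1..n}. mm (mm (Eu c) x) (Eu d)) (mm z (Eu e))"
    by (simp add: mm_sum_left)
  also have "\<dots> = mm (mm (Eu c) x) (mm z (Eu e))"
    unfolding sum_Yd[OF assms] ..
  also have "\<dots> = Yd c (mm x z) e" by (simp add: mm_assoc)
  finally show ?thesis .
qed

lemma dd_decomp: "dd f (y # w # ws) = la y (f (w # ws)) - f (mm y w # ws) - dd (\<lambda>vs. f (y # vs)) (w # ws) + la w (f (y # ws))"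
  by (simp only: dd_Cons D.simps) (simp add: algebra_simps)

lemma K_hd: "K d (\<lambda>ws. f (mm y (hd ws) # tl ws)) (z # zt) =
   f (mm y (Eu d) # z # zt) - (\<Sum>e\<in>{1..n}. K e (\<lambda>vs. f (mm y (Yd d z e) # vs)) zt)"
  by (simp only: K.simps list.sel)

lemma K_hd2: "K d (\<lambda>ws. la (hd ws) (f (y # tl ws))) (z # zt) =
   la (Eu d) (f (y # z # zt)) - (\<Sum>e\<in>{1..n}. la (Yd d z e) (K e (\<lambda>vs. f (y # vs)) zt))"
  by (simp only: K.simps list.sel K_la)

lemma star:
  assumes "MLN (Suc (length xs)) f" "x \<in> incidence_alg n Arr t h" "xs \<in> lists (incidence_alg n Arr t h)" "c \<in> {1..n}"
  shows "K c (dd f) (x#xs) + D (K c f) (x#xs) = la (Eu c) (f (x#xs))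
      - (\<Sum>d\<in>{1..n}. la (Yd c x d) (K d f xs) + L d (\<lambda>ws. f (Yd c x d # ws)) xs)"
  using assms
proof (induction xs arbitrary: f c x)
  case Nil
  note MLf = Nil.prems(1) and xA = Nil.prems(2) and cn = Nil.prems(4)
  have sY: "(\<Sum>d\<in>{1..n}. f [Yd c x d]) = f [mm (Eu c) x]"
  proof -
    have "f ([x][0 := sum (Yd c x) {1..n}]) = (\<Sum>d\<in>{1..n}. f ([x][0 := Yd c x d]))"
      by (rule MLN_sum[OF MLf]) (use xA cn Yd_A in auto)
    then show ?thesis using sum_Yd[OF cn xA] by simp
  qed
  have e1: "K c (dd f) [x] = dd f [Eu c, x] - (\<Sum>d\<in>{1..n}. dd f [Yd c x d, Eu d])"
    by (simp only: K.simps)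
  have e2: "dd f [Eu c, x] = la (Eu c) (f [x]) - f [mm (Eu c) x] + ra (f [Eu c]) x"
    by (simp only: dd_Cons D.simps) (simp add: algebra_simps)
  have e3: "dd f [Yd c x d, Eu d] = la (Yd c x d) (f [Eu d]) - f [Yd c x d] + ra (f [Yd c x d]) (Eu d)"
    if "d \<in> {1..n}" for d
    using that by (simp only: dd_Cons D.simps Yd_Eu) (simp add: algebra_simps)
  have e4: "D (K c f) [x] = - ra (f [Eu c]) x"
    by (simp only: D.simps K.simps)
  have e5: "(\<Sum>d\<in>{1..n}. la (Yd c x d) (K d f []) + L d (\<lambda>ws. f (Yd c x d # ws)) [])
     = (\<Sum>d\<in>{1..n}. la (Yd c x d) (f [Eu d]) + ra (f [Yd c x d]) (Eu d))"
    by (simp only: K.simps L.simps)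
  have e6: "(\<Sum>d\<in>{1..n}. dd f [Yd c x d, Eu d]) = (\<Sum>d\<in>{1..n}. la (Yd c x d) (f [Eu d]) + ra (f [Yd c x d]) (Eu d)) - f [mm (Eu c) x]"
  proof -
    have "(\<Sum>d\<in>{1..n}. dd f [Yd c x d, Eu d]) = (\<Sum>d\<in>{1..n}. (la (Yd c x d) (f [Eu d]) + ra (f [Yd c x d]) (Eu d)) - f [Yd c x d])"
      by (rule sum.cong[OF refl]) (simp add: e3)
    also have "\<dots> = (\<Sum>d\<in>{1..n}. la (Yd c x d) (f [Eu d]) + ra (f [Yd c x d]) (Eu d)) - (\<Sum>d\<in>{1..n}. f [Yd c x d])"
      by (rule sum_subtractf)
    finally show ?thesis using sY by simp
  qed
  show ?case unfolding e1 e2 e4 e5 e6 by (simp add: algebra_simps)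
next
  case (Cons z zt)
  note MLf = Cons.prems(1) and xA = Cons.prems(2) and cn = Cons.prems(4)
  have zA: "z \<in> incidence_alg n Arr t h" and ztA: "zt \<in> lists (incidence_alg n Arr t h)" using Cons.prems(3) by auto
  have a: "K c (dd f) (x#z#zt) = dd f (Eu c#x#z#zt) - (\<Sum>d\<in>{1..n}. K d (\<lambda>ws. dd f (Yd c x d # ws)) (z#zt))"
    by (simp only: K.simps)
  have b: "dd f (Eu c#x#z#zt) = la (Eu c) (f (x#z#zt)) - f (mm (Eu c) x # z # zt) + f (Eu c # mm x z # zt)
       + D (\<lambda>ws. f (Eu c#x#ws)) (z#zt)"
    by (simp only: dd_Cons D.simps) (simp add: algebra_simps)
  have c1: "(\<lambda>ws. K c f (x#ws)) = (\<lambda>ws. f (Eu c#x#ws) - (\<Sum>d\<in>{1..n}. K d (\<lambda>vs. f (Yd c x d # vs)) ws))"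
    by (simp only: K.simps)
  have c: "D (K c f) (x#z#zt) = - f (Eu c # mm x z # zt) + (\<Sum>d\<in>{1..n}. K d (\<lambda>vs. f (Yd c (mm x z) d # vs)) zt)
       - D (\<lambda>ws. f (Eu c#x#ws)) (z#zt) + (\<Sum>d\<in>{1..n}. D (K d (\<lambda>vs. f (Yd c x d # vs))) (z#zt))"
  proof -
    have h1: "D (K c f) (x#z#zt) = - K c f (mm x z # zt) - D (\<lambda>ws. K c f (x#ws)) (z#zt)"
      by (simp only: D.simps)
    have h2: "D (\<lambda>ws. K c f (x#ws)) (z#zt) = D (\<lambda>ws. f (Eu c#x#ws)) (z#zt) - (\<Sum>d\<in>{1..n}. D (K d (\<lambda>vs. f (Yd c x d # vs))) (z#zt))"
      by (simp only: c1 D_minus D_sum)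
    have h3: "K c f (mm x z # zt) = f (Eu c # mm x z # zt) - (\<Sum>d\<in>{1..n}. K d (\<lambda>vs. f (Yd c (mm x z) d # vs)) zt)"
      by (simp only: K.simps)
    show ?thesis unfolding h1 h2 h3 by (simp add: algebra_simps)
  qed
  have d: "K d (\<lambda>ws. dd f (Yd c x d # ws)) (z#zt) = la (Yd c x d) (K d f (z#zt)) - f (Yd c x d # z # zt)
      + (\<Sum>e\<in>{1..n}. K e (\<lambda>vs. f (mm (Yd c x d) (Yd d z e) # vs)) zt)
      + D (K d (\<lambda>vs. f (Yd c x d # vs))) (z#zt)
      + (\<Sum>e\<in>{1..n}. L e (\<lambda>vs. f (Yd c x d # Yd d z e # vs)) zt)"
    if dn: "d \<in> {1..n}" for d
  proof -
    have yA: "Yd c x d \<in> incidence_alg n Arr t h" using cn dn xA by (rule Yd_A)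
    have MLg: "MLN (Suc (length zt)) (\<lambda>vs. f (Yd c x d # vs))"
      by (rule MLN_cons) (use MLf yA in simp_all)
    have IH: "K d (dd (\<lambda>vs. f (Yd c x d # vs))) (z#zt) + D (K d (\<lambda>vs. f (Yd c x d # vs))) (z#zt) =
       la (Eu d) (f (Yd c x d # z # zt)) - (\<Sum>e\<in>{1..n}. la (Yd d z e) (K e (\<lambda>vs. f (Yd c x d # vs)) zt) + L e (\<lambda>ws. f (Yd c x d # Yd d z e # ws)) zt)"
      using Cons.IH[OF MLg zA ztA dn] by simp
    have s1: "K d (\<lambda>ws. dd f (Yd c x d # ws)) (z#zt) = K d (\<lambda>ws. la (Yd c x d) (f ws) - f (mm (Yd c x d) (hd ws) # tl ws) - dd (\<lambda>vs. f (Yd c x d # vs)) ws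
        + la (hd ws) (f (Yd c x d # tl ws))) (z#zt)"
      by (rule K_cong_ne) (simp only: dd_decomp list.sel)
    have s2: "K d (\<lambda>ws. la (Yd c x d) (f ws) - f (mm (Yd c x d) (hd ws) # tl ws) - dd (\<lambda>vs. f (Yd c x d # vs)) ws
        + la (hd ws) (f (Yd c x d # tl ws))) (z#zt) = la (Yd c x d) (K d f (z#zt)) - K d (\<lambda>ws. f (mm (Yd c x d) (hd ws) # tl ws)) (z#zt) - K d (dd (\<lambda>vs. f (Yd c x d # vs))) (z#zt)
        + K d (\<lambda>ws. la (hd ws) (f (Yd c x d # tl ws))) (z#zt)"
      by (simp only: K_add K_minus K_la)
    have s3: "K d (\<lambda>ws. f (mm (Yd c x d) (hd ws) # tl ws)) (z#zt) = f (Yd c x d # z # zt) - (\<Sum>e\<in>{1..n}. K e (\<lambda>vs. f (mm (Yd c x d) (Yd d z e) # vs)) zt)"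
      by (simp only: K_hd Yd_Eu[OF dn])
    have s4: "K d (\<lambda>ws. la (hd ws) (f (Yd c x d # tl ws))) (z#zt) = la (Eu d) (f (Yd c x d # z # zt)) - (\<Sum>e\<in>{1..n}. la (Yd d z e) (K e (\<lambda>vs. f (Yd c x d # vs)) zt))"
      by (rule K_hd2)
    have s5: "K d (dd (\<lambda>vs. f (Yd c x d # vs))) (z#zt) = - D (K d (\<lambda>vs. f (Yd c x d # vs))) (z#zt) +
       la (Eu d) (f (Yd c x d # z # zt)) - (\<Sum>e\<in>{1..n}. la (Yd d z e) (K e (\<lambda>vs. f (Yd c x d # vs)) zt)) - (\<Sum>e\<in>{1..n}. L e (\<lambda>ws. f (Yd c x d # Yd d z e # ws)) zt)"
      using IH by (simp add: sum.distrib algebra_simps)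
    show ?thesis unfolding s1 s2 s3 s4 s5 by (simp add: algebra_simps)
  qed
  have e: "(\<Sum>d\<in>{1..n}. f (Yd c x d # z # zt)) = f (mm (Eu c) x # z # zt)"
  proof -
    have "f ((x#z#zt)[0 := sum (Yd c x) {1..n}]) = (\<Sum>d\<in>{1..n}. f ((x#z#zt)[0 := Yd c x d]))"
      by (rule MLN_sum[OF MLf]) (use xA zA ztA cn Yd_A in auto)
    then show ?thesis using sum_Yd[OF cn xA] by simp
  qed
  have ff: "(\<Sum>d\<in>{1..n}. \<Sum>e\<in>{1..n}. K e (\<lambda>vs. f (mm (Yd c x d) (Yd d z e) # vs)) zt)
      = (\<Sum>e\<in>{1..n}. K e (\<lambda>vs. f (Yd c (mm x z) e # vs)) zt)"
  proof -
    have "(\<Sum>d\<in>{1..n}. K e (\<lambda>vs. f (mm (Yd c x d) (Yd d z e) # vs)) zt) = K e (\<lambda>vs. f (Yd c (mm x z) e # vs)) zt"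
      if en: "e \<in> {1..n}" for e
    proof -
      have "(\<Sum>d\<in>{1..n}. K e (\<lambda>vs. f (mm (Yd c x d) (Yd d z e) # vs)) zt) =
          K e (\<lambda>vs. \<Sum>d\<in>{1..n}. f (mm (Yd c x d) (Yd d z e) # vs)) zt"
        by (simp only: K_sum)
      also have "\<dots> = K e (\<lambda>vs. f (Yd c (mm x z) e # vs)) zt"
      proof (rule K_cong[OF _ ztA en])
        fix vs :: "'a mat list" assume vs: "vs \<in> lists (incidence_alg n Arr t h)" "length vs = Suc (length zt)"
        have "f ((x#vs)[0 := (\<Sum>d\<in>{1..n}. mm (Yd c x d) (Yd d z e))]) = (\<Sum>d\<in>{1..n}. f ((x#vs)[0 := mm (Yd c x d) (Yd d z e)]))"
          by (rule MLN_sum[OF MLf]) (use vs xA zA cn en in \<open>auto intro!: mm_A Eu_A\<close>)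
        then show "(\<Sum>d\<in>{1..n}. f (mm (Yd c x d) (Yd d z e) # vs)) = f (Yd c (mm x z) e # vs)"
          using sum_YY[OF cn xA, of z e] by simp
      qed
      finally show ?thesis .
    qed
    then show ?thesis by (subst sum.swap) (rule sum.cong[OF refl])
  qed
  have g: "L d (\<lambda>ws. f (Yd c x d # ws)) (z#zt) = (\<Sum>e\<in>{1..n}. L e (\<lambda>vs. f (Yd c x d # Yd d z e # vs)) zt)" for d
    by (simp only: L.simps)
  have sd: "(\<Sum>d\<in>{1..n}. K d (\<lambda>ws. dd f (Yd c x d # ws)) (z#zt)) =
      (\<Sum>d\<in>{1..n}. la (Yd c x d) (K d f (z#zt))) - (\<Sum>d\<in>{1..n}. f (Yd c x d # z # zt))
      + (\<Sum>d\<in>{1..n}. \<Sum>e\<in>{1..n}. K e (\<lambda>vs. f (mm (Yd c x d) (Yd d z e) # vs)) zt)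
      + (\<Sum>d\<in>{1..n}. D (K d (\<lambda>vs. f (Yd c x d # vs))) (z#zt))
      + (\<Sum>d\<in>{1..n}. L d (\<lambda>ws. f (Yd c x d # ws)) (z#zt))"
    by (simp add: d g sum.distrib sum_subtractf)
  show ?case
    unfolding a b c sd e ff by (simp add: sum.distrib algebra_simps)
qed

lemma Yd_explicit: "c \<in> {1..n} \<Longrightarrow> d \<in> {1..n} \<Longrightarrow> Yd c x d = (\<lambda>i j. if i = c \<and> j = d then x c d else 0)"
  by (simp add: mm_Eu_left mm_Eu_right fun_eq_iff)

lemma la_Eu_apply: "b \<in> {1..n} \<Longrightarrow> la (Eu b) m i j = (if i \<in> {1..n} \<and> j \<in> {1..n} \<and> \<not> ge j i then (if i = b then m b j else 0) else 0)"
  by (simp add: lact_def mm_Eu_left P_apply)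

lemma ra_Eu_apply: "b \<in> {1..n} \<Longrightarrow> ra m (Eu b) i j = (if i \<in> {1..n} \<and> j \<in> {1..n} \<and> \<not> ge j i then (if j = b then m i b else 0) else 0)"
  by (simp add: ract_def mm_Eu_right P_apply)

lemma L_kill:
  assumes "MLN (length xs) g" "xs \<in> lists (incidence_alg n Arr t h)" "c \<in> {1..n}" "b \<in> {1..n}" "ge c b"
  shows "la (Eu b) (L c g xs) = 0"
  using assms
proof (induction xs arbitrary: g c)
  case Nil
  have "la (Eu b) (ra (g []) (Eu c)) i j = 0" for i j
    using Nil.prems(3-5) by (auto simp: la_Eu_apply ra_Eu_apply)
  then show ?case by (simp only: L.simps) (simp add: fun_eq_iff)
next
  case (Cons x xs)
  have xA: "x \<in> incidence_alg n Arr t h" and xsA: "xs \<in> lists (incidence_alg n Arr t h)" using Cons.prems(2) by auto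
  have "la (Eu b) (L d (\<lambda>ws. g (Yd c x d # ws)) xs) = 0" if dn: "d \<in> {1..n}" for d
  proof (cases "x c d = 0")
    case True
    then have "Yd c x d = 0" using Cons.prems(3) dn by (simp add: Yd_explicit fun_eq_iff)
    have "L d (\<lambda>ws. g (Yd c x d # ws)) xs = 0"
    proof (rule L_vanish[OF _ xsA dn])
      fix ws :: "'a mat list" assume "ws \<in> lists (incidence_alg n Arr t h)" "length ws = length xs"
      then show "g (Yd c x d # ws) = 0"
        using MLN_zero_mem[OF Cons.prems(1), of "Yd c x d # ws"] \<open>Yd c x d = 0\<close> zero_A by simp
    qed
    then show ?thesis by (simp add: la_zero)
  next
    case False
    then have "ge d c" using A_ge[OF xA] by blast
    then have "ge d b" using Cons.prems(5) ge_trans by blast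
    have MLg: "MLN (length xs) (\<lambda>ws. g (Yd c x d # ws))"
      by (rule MLN_cons) (use Cons.prems(1) Yd_A[OF Cons.prems(3) dn xA] in simp_all)
    show ?thesis by (rule Cons.IH[OF MLg xsA dn Cons.prems(4) \<open>ge d b\<close>])
  qed
  then show ?case by (simp only: L.simps la_sum) (simp add: sum.neutral)
qed

lemma sum_la_Eu: assumes "P m = m" shows "(\<Sum>c\<in>{1..n}. la (Eu c) m) = m"
proof -
  have "(\<Sum>c\<in>{1..n}. la (Eu c) m) i j = m i j" for i j
  proof -
    have "(\<Sum>c\<in>{1..n}. la (Eu c) m) i j = (\<Sum>c\<in>{1..n}. (if i \<in> {1..n} \<and> j \<in> {1..n} \<and> \<not> ge j i then (if i = c then m c j else 0) else 0))"
      by (simp add: sum_mat_apply la_Eu_apply)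
    also have "\<dots> = P m i j"
      by (cases "i \<in> {1..n} \<and> j \<in> {1..n} \<and> \<not> ge j i") (auto simp: P_apply sum.delta)
    finally show ?thesis using assms by simp
  qed
  then show ?thesis by (simp add: fun_eq_iff)
qed

lemma sum_Eu_mm: assumes "X \<in> incidence_alg n Arr t h" shows "(\<Sum>c\<in>{1..n}. mm (Eu c) X) = X"
proof -
  have "(\<Sum>c\<in>{1..n}. mm (Eu c) X) i j = X i j" for i j
  proof -
    have "(\<Sum>c\<in>{1..n}. mm (Eu c) X) i j = (\<Sum>c\<in>{1..n}. if i = c then X c j else 0)"
      by (simp add: sum_mat_apply mm_Eu_left)
    also have "\<dots> = (if i \<in> {1..n} then X i j else 0)"
      by (simp add: sum.delta')
    also have "\<dots> = X i j" using A_mats[OF assms] by auto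
    finally show ?thesis .
  qed
  then show ?thesis by (simp add: fun_eq_iff)
qed

lemma sum_la_Yd: assumes "x \<in> incidence_alg n Arr t h" "d \<in> {1..n}"
  shows "(\<Sum>c\<in>{1..n}. la (Eu c) (la (Yd c x d) M)) = la x (la (Eu d) M)"
proof -
  have "(\<Sum>c\<in>{1..n}. la (Eu c) (la (Yd c x d) M)) = (\<Sum>c\<in>{1..n}. la (mm (Eu c) (Yd c x d)) M)"
    by (rule sum.cong[OF refl]) (simp add: la_la Eu_A)
  also have "\<dots> = (\<Sum>c\<in>{1..n}. la (Yd c x d) M)"
    by (rule sum.cong[OF refl]) (simp add: Eu_idem flip: mm_assoc)
  also have "\<dots> = la (\<Sum>c\<in>{1..n}. Yd c x d) M" by (simp add: la_sum_left)
  also have "\<dots> = la (mm x (Eu d)) M"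
  proof -
    have "(\<Sum>c\<in>{1..n}. Yd c x d) = mm (\<Sum>c\<in>{1..n}. mm (Eu c) x) (Eu d)" by (simp only: mm_sum_left)
    then show ?thesis using sum_Eu_mm[OF assms(1)] by simp
  qed
  also have "\<dots> = la x (la (Eu d) M)" by (simp add: la_la assms)
  finally show ?thesis .
qed

lemma HH_Cons_fun: "HH f = (\<lambda>ys. \<Sum>c\<in>{1..n}. la (Eu c) (K c f ys))"
  by (simp add: fun_eq_iff HH_def)

lemma cobound:
  assumes MLf: "MLN (Suc m) f"
    and vals: "\<And>ys. ys \<in> lists (incidence_alg n Arr t h) \<Longrightarrow> length ys = Suc m \<Longrightarrow> P (f ys) = f ys"
    and cyc: "\<And>ys. ys \<in> lists (incidence_alg n Arr t h) \<Longrightarrow> length ys = Suc (Suc m) \<Longrightarrow> dd f ys = 0"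
    and xsA: "xs \<in> lists (incidence_alg n Arr t h)" and len: "length xs = Suc m"
  shows "dd (HH f) xs = f xs"
proof -
  obtain x xs' where xs: "xs = x # xs'" using len by (cases xs) auto
  have xA: "x \<in> incidence_alg n Arr t h" and xsA': "xs' \<in> lists (incidence_alg n Arr t h)" using xsA xs by auto
  have ML1: "MLN (Suc (length xs')) f" using MLf len xs by simp
  have Kz: "K c (dd f) (x#xs') = 0" if cn: "c \<in> {1..n}" for c
  proof -
    have "K c (dd f) (x#xs') = K c (\<lambda>ws. 0) (x#xs')"
      by (rule K_cong[OF _ _ cn]) (use cyc xsA xs len in auto)
    then show ?thesis by (simp add: K_zero)
  qed
  have st: "D (K c f) (x#xs') = la (Eu c) (f (x#xs'))
      - (\<Sum>d\<in>{1..n}. la (Yd c x d) (K d f xs') + L d (\<lambda>ws. f (Yd c x d # ws)) xs')" if cn: "c \<in> {1..n}" for c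
    using star[OF ML1 xA xsA' cn] Kz[OF cn] by simp
  have DH: "D (HH f) (x#xs') = (\<Sum>c\<in>{1..n}. la (Eu c) (D (K c f) (x#xs')))"
    unfolding HH_Cons_fun D_sum by (rule sum.cong[OF refl], rule D_la) (use Eu_A xsA xs in auto)
  have t1: "(\<Sum>c\<in>{1..n}. la (Eu c) (la (Eu c) (f (x#xs')))) = f (x#xs')"
  proof -
    have "(\<Sum>c\<in>{1..n}. la (Eu c) (la (Eu c) (f (x#xs')))) = (\<Sum>c\<in>{1..n}. la (Eu c) (f (x#xs')))"
      by (rule sum.cong[OF refl]) (simp add: la_la Eu_A Eu_idem)
    also have "\<dots> = f (x#xs')" by (rule sum_la_Eu) (use vals xsA xs len in auto)
    finally show ?thesis .
  qed
  have t2: "(\<Sum>c\<in>{1..n}. la (Eu c) (\<Sum>d\<in>{1..n}. la (Yd c x d) (K d f xs'))) = la x (HH f xs')"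
  proof -
    have "(\<Sum>c\<in>{1..n}. la (Eu c) (\<Sum>d\<in>{1..n}. la (Yd c x d) (K d f xs'))) = (\<Sum>d\<in>{1..n}. \<Sum>c\<in>{1..n}. la (Eu c) (la (Yd c x d) (K d f xs')))"
      by (simp only: la_sum) (rule sum.swap)
    also have "\<dots> = (\<Sum>d\<in>{1..n}. la x (la (Eu d) (K d f xs')))"
      by (rule sum.cong[OF refl]) (rule sum_la_Yd[OF xA])
    also have "\<dots> = la x (HH f xs')" by (simp add: HH_def la_sum)
    finally show ?thesis .
  qed
  have t3: "(\<Sum>c\<in>{1..n}. la (Eu c) (\<Sum>d\<in>{1..n}. L d (\<lambda>ws. f (Yd c x d # ws)) xs')) = 0"
  proof (rule sum.neutral, rule ballI)
    fix c assume cn: "c \<in> {1..n}"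
    have "la (Eu c) (L c f (x # xs')) = 0"
      by (rule L_kill) (use MLf len xs xsA cn ge_refl in auto)
    then show "la (Eu c) (\<Sum>d\<in>{1..n}. L d (\<lambda>ws. f (Yd c x d # ws)) xs') = 0"
      by (simp only: L.simps)
  qed
  have "D (HH f) (x#xs') = f (x#xs') - la x (HH f xs')"
  proof -
    have "D (HH f) (x#xs') = (\<Sum>c\<in>{1..n}. la (Eu c) (la (Eu c) (f (x#xs'))) - la (Eu c) (\<Sum>d\<in>{1..n}. la (Yd c x d) (K d f xs'))
        - la (Eu c) (\<Sum>d\<in>{1..n}. L d (\<lambda>ws. f (Yd c x d # ws)) xs'))"
      unfolding DH by (rule sum.cong[OF refl]) (simp add: st la_minus la_add sum.distrib)
    also have "\<dots> = f (x#xs') - la x (HH f xs')"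
      by (simp only: sum_subtractf t1 t2 t3) simp
    finally show ?thesis .
  qed
  then show ?thesis unfolding xs by (simp add: dd_Cons)
qed

lemma D_formula:
  "length xs = Suc m \<Longrightarrow> D f xs r s = (\<Sum>k\<in>{1..m}. (-1) ^ k * f (take (k - 1) xs @ [mm (xs ! (k - 1)) (xs ! k)] @ drop (k + 1) xs) r s)
     + (-1) ^ (m + 1) * ra (f (take m xs)) (xs ! m) r s"
proof (induction m arbitrary: f xs)
  case 0
  then obtain x where "xs = [x]" by (cases xs) auto
  then show ?case by (simp add: D.simps)
next
  case (Suc m)
  then obtain x y zs where xs: "xs = x # y # zs" and lz: "length zs = m"
    by (cases xs; cases "tl xs") auto
  define ys where "ys = y # zs"
  have ly: "length ys = Suc m" using lz ys_def by simp
  have IH: "D (\<lambda>ws. f (x # ws)) ys r s = (\<Sum>k\<in>{1..m}. (-1) ^ k * f (x # (take (k - 1) ys @ [mm (ys ! (k - 1)) (ys ! k)] @ drop (k + 1) ys)) r s)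
     + (-1) ^ (m + 1) * ra (f (x # take m ys)) (ys ! m) r s"
    using Suc.IH[OF ly, of "\<lambda>ws. f (x # ws)"] by simp
  define T where "T = (\<lambda>k. (-1) ^ k * f (take (k - 1) xs @ [mm (xs ! (k - 1)) (xs ! k)] @ drop (k + 1) xs) r s)"
  have a1: "sum T {1..Suc m} = T 1 + sum T {Suc 1..Suc m}" by (rule sum.atLeast_Suc_atMost) simp
  have a2: "sum T {Suc 1..Suc m} = sum (\<lambda>k. T (Suc k)) {1..m}" by (rule sum.shift_bounds_cl_Suc_ivl)
  have split0: "sum T {1..Suc m} = T 1 + sum (\<lambda>k. T (Suc k)) {1..m}"
    by (simp only: a1 a2)
  have T1: "T 1 = - f (mm x y # zs) r s" by (simp add: T_def xs)
  have split: "(\<Sum>k\<in>{1..Suc m}. (-1) ^ k * f (take (k - 1) xs @ [mm (xs ! (k - 1)) (xs ! k)] @ drop (k + 1) xs) r s)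
     = - f (mm x y # zs) r s + (\<Sum>k\<in>{1..m}. (-1) ^ Suc k * f (take k xs @ [mm (xs ! k) (xs ! Suc k)] @ drop (Suc k + 1) xs) r s)"
    using split0 T1 unfolding T_def by simp
  have terms: "(\<Sum>k\<in>{1..m}. (-1) ^ Suc k * f (take k xs @ [mm (xs ! k) (xs ! Suc k)] @ drop (Suc k + 1) xs) r s)
     = - (\<Sum>k\<in>{1..m}. (-1) ^ k * f (x # (take (k - 1) ys @ [mm (ys ! (k - 1)) (ys ! k)] @ drop (k + 1) ys)) r s)"
  proof -
    have "(-1) ^ Suc k * f (take k xs @ [mm (xs ! k) (xs ! Suc k)] @ drop (Suc k + 1) xs) r s
        = - ((-1) ^ k * f (x # (take (k - 1) ys @ [mm (ys ! (k - 1)) (ys ! k)] @ drop (k + 1) ys)) r s)"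
      if "k \<in> {1..m}" for k
      using that by (cases k) (auto simp: xs ys_def)
    then show ?thesis by (simp add: sum_negf)
  qed
  have last: "ra (f (take (Suc m) xs)) (xs ! Suc m) r s = ra (f (x # take m ys)) (ys ! m) r s"
    by (simp add: xs ys_def)
  have "D f xs r s = - f (mm x y # zs) r s - D (\<lambda>ws. f (x # ws)) ys r s"
    by (simp add: xs ys_def D.simps)
  then show ?case unfolding split terms last IH by (simp add: algebra_simps)
qed

lemma hdiff_dd: "length xs = Suc m \<Longrightarrow> hdiff n Arr t h m f xs = dd f xs"
proof -
  assume len: "length xs = Suc m"
  then obtain x xs' where xs: "xs = x # xs'" by (cases xs) auto
  show ?thesis
    unfolding hdiff_def fun_eq_iff
  proof (intro allI)
    fix r s
    show "la (xs ! 0) (f (drop 1 xs)) r s +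
       (\<Sum>k\<in>{1..m}. (-1) ^ k * f (take (k - 1) xs @ [mm (xs ! (k - 1)) (xs ! k)] @ drop (k + 1) xs) r s) +
       (-1) ^ (m + 1) * ra (f (take m xs)) (xs ! m) r s = dd f xs r s"
      using D_formula[OF len, of f r s] by (simp add: dd_def xs)
  qed
qed

lemma MLN_I: "(\<And>xs k x y a. xs \<in> lists (incidence_alg n Arr t h) \<Longrightarrow> length xs = m \<Longrightarrow> k < m \<Longrightarrow>
    x \<in> incidence_alg n Arr t h \<Longrightarrow> y \<in> incidence_alg n Arr t h \<Longrightarrow>
    g (xs[k := msmult a x + y]) = msmult a (g (xs[k := x])) + g (xs[k := y])) \<Longrightarrow> MLN m g"
  unfolding MLN_def madd_eq by blast

lemma mm_lin_right: "mm X (msmult a Y + Z) = msmult a (mm X Y) + mm X Z"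
  using mm_madd_right[of X a Y Z] by (simp add: madd_eq)
lemma mm_lin_left: "mm (msmult a Y + Z) X = msmult a (mm Y X) + mm Z X"
  using mm_madd_left[of a Y Z X] by (simp add: madd_eq)

lemma msmult_A: "x \<in> incidence_alg n Arr t h \<Longrightarrow> y \<in> incidence_alg n Arr t h \<Longrightarrow> msmult a x + y \<in> incidence_alg n Arr t h"
  using madd_A[of x y a] by (simp add: madd_eq)

lemma K_lin:
  assumes "MLN (Suc (length ws)) f" "ws \<in> lists (incidence_alg n Arr t h)" "k < length ws"
    "x \<in> incidence_alg n Arr t h" "y \<in> incidence_alg n Arr t h" "c \<in> {1..n}"
  shows "K c f (ws[k := msmult a x + y]) = msmult a (K c f (ws[k := x])) + K c f (ws[k := y])"
  using assms
proof (induction ws arbitrary: f c k)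
  case Nil then show ?case by simp
next
  case (Cons w ws)
  note MLf = Cons.prems(1) and xA = Cons.prems(4) and yA = Cons.prems(5) and cn = Cons.prems(6)
  have wA: "w \<in> incidence_alg n Arr t h" and wsA: "ws \<in> lists (incidence_alg n Arr t h)" using Cons.prems(2) by auto
  have EA: "Eu c \<in> incidence_alg n Arr t h" using cn by (rule Eu_A)
  have comb: "\<And>F1 F2 S1 S2. (msmult a F1 + F2) - (msmult a S1 + S2) = msmult a (F1 - S1) + (F2 - (S2::'a mat))"
    by (simp add: msmult_minus algebra_simps)
  show ?case
  proof (cases k)
    case 0
    have f1: "f (Eu c # (msmult a x + y) # ws) = msmult a (f (Eu c # x # ws)) + f (Eu c # y # ws)"
      using MLN_D[OF MLf, of "Eu c # w # ws" 1 x y a] EA wA wsA xA yA by simp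
    have f2: "K d (\<lambda>vs. f (Yd c (msmult a x + y) d # vs)) ws =
        msmult a (K d (\<lambda>vs. f (Yd c x d # vs)) ws) + K d (\<lambda>vs. f (Yd c y d # vs)) ws" if dn: "d \<in> {1..n}" for d
    proof -
      have "K d (\<lambda>vs. f (Yd c (msmult a x + y) d # vs)) ws = K d (\<lambda>vs. msmult a (f (Yd c x d # vs)) + f (Yd c y d # vs)) ws"
      proof (rule K_cong[OF _ wsA dn])
        fix vs :: "'a mat list" assume vs: "vs \<in> lists (incidence_alg n Arr t h)" "length vs = Suc (length ws)"
        have "Yd c (msmult a x + y) d = msmult a (Yd c x d) + Yd c y d"
          by (simp add: mm_lin_left mm_lin_right)
        moreover have "f ((Yd c x d # vs)[0 := msmult a (Yd c x d) + Yd c y d]) = msmult a (f ((Yd c x d # vs)[0 := Yd c x d])) + f ((Yd c x d # vs)[0 := Yd c y d])"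
          by (rule MLN_D[OF MLf]) (use vs Yd_A[OF cn dn xA] Yd_A[OF cn dn yA] in auto)
        ultimately show "f (Yd c (msmult a x + y) d # vs) = msmult a (f (Yd c x d # vs)) + f (Yd c y d # vs)" by simp
      qed
      then show ?thesis by (simp only: K_add K_msmult)
    qed
    have "K c f ((msmult a x + y) # ws) = msmult a (K c f (x # ws)) + K c f (y # ws)"
      by (simp only: K.simps f1 sum.cong[OF refl f2] sum.distrib msmult_sum[symmetric] comb)
    then show ?thesis using 0 by simp
  next
    case (Suc k')
    have k': "k' < length ws" using Cons.prems(3) Suc by simp
    have f1: "f (Eu c # w # ws[k' := msmult a x + y]) = msmult a (f (Eu c # w # ws[k' := x])) + f (Eu c # w # ws[k' := y])"
      using MLN_D[OF MLf, of "Eu c # w # ws" "Suc (Suc k')" x y a] EA wA wsA xA yA k' by simp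
    have f2: "K d (\<lambda>vs. f (Yd c w d # vs)) (ws[k' := msmult a x + y]) =
        msmult a (K d (\<lambda>vs. f (Yd c w d # vs)) (ws[k' := x])) + K d (\<lambda>vs. f (Yd c w d # vs)) (ws[k' := y])"
      if dn: "d \<in> {1..n}" for d
    proof (rule Cons.IH[OF _ wsA k' xA yA dn])
      show "MLN (Suc (length ws)) (\<lambda>vs. f (Yd c w d # vs))"
        by (rule MLN_cons) (use MLf Yd_A[OF cn dn wA] in simp_all)
    qed
    have "K c f (w # ws[k' := msmult a x + y]) = msmult a (K c f (w # ws[k' := x])) + K c f (w # ws[k' := y])"
      by (simp only: K.simps f1 sum.cong[OF refl f2] sum.distrib msmult_sum[symmetric] comb)
    then show ?thesis using Suc by simp
  qed
qed

lemma HH_MLN: assumes "MLN (Suc m) f" shows "MLN m (HH f)"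
proof (rule MLN_I)
  fix xs :: "'a mat list" and k :: nat and x y :: "'a mat" and a :: 'a
  assume h: "xs \<in> lists (incidence_alg n Arr t h)" "length xs = m" "k < m" "x \<in> incidence_alg n Arr t h" "y \<in> incidence_alg n Arr t h"
  have "K c f (xs[k := msmult a x + y]) = msmult a (K c f (xs[k := x])) + K c f (xs[k := y])" if "c \<in> {1..n}" for c
    by (rule K_lin) (use assms h that in auto)
  then show "HH f (xs[k := msmult a x + y]) = msmult a (HH f (xs[k := x])) + HH f (xs[k := y])"
    unfolding HH_def by (simp add: la_add la_msmult sum.distrib msmult_sum)
qed

lemma HH_P: "P (HH f ys) = HH f ys"
  unfolding HH_def lact_def by (simp add: P_sum P_P)

lemma hcochain_iff: "hcochain n Arr t h i f \<longleftrightarrow>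
   (\<forall>xs\<in>lists (incidence_alg n Arr t h). length xs = i \<longrightarrow> P (f xs) = f xs) \<and> MLN i f"
  by (simp add: hcochain_def MLN_def quot_mod_def)

lemma deg0: assumes "P m0 = m0" "\<And>x. x \<in> incidence_alg n Arr t h \<Longrightarrow> la x m0 - ra m0 x = 0"
  shows "m0 = 0"
proof -
  have "m0 b a = 0" for b a
  proof (cases "b \<in> {1..n} \<and> a \<in> {1..n} \<and> \<not> ge a b")
    case True
    then have bn: "b \<in> {1..n}" and ab: "a \<noteq> b" using ge_refl by auto
    have "(la (Eu b) m0 - ra m0 (Eu b)) b a = 0" using assms(2)[OF Eu_A[OF bn]] by simp
    then show ?thesis using True ab bn by (simp add: la_Eu_apply ra_Eu_apply)
  next
    case False
    then have "P m0 b a = 0" by (auto simp: P_apply)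
    then show ?thesis using assms(1) by simp
  qed
  then show ?thesis by (simp add: fun_eq_iff)
qed

lemma main_thm: "hochschild_vanishes n Arr t h i TYPE('a::comm_ring_1)"
  unfolding hochschild_vanishes_def
proof (intro allI impI)
  fix f :: "'a mat list \<Rightarrow> 'a mat"
  assume H: "hcochain n Arr t h i f \<and> (\<forall>xs\<in>lists (incidence_alg n Arr t h). length xs = Suc i \<longrightarrow> hdiff n Arr t h i f xs = (\<lambda>_ _. 0))"
  then have vals: "\<And>xs. xs \<in> lists (incidence_alg n Arr t h) \<Longrightarrow> length xs = i \<Longrightarrow> P (f xs) = f xs"
    and MLf: "MLN i f" by (auto simp: hcochain_iff)
  have cyc: "\<And>xs. xs \<in> lists (incidence_alg n Arr t h) \<Longrightarrow> length xs = Suc i \<Longrightarrow> dd f xs = 0"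
    using H hdiff_dd by fastforce
  show "if i = 0 then f [] = (\<lambda>_ _. 0) else (\<exists>g. hcochain n Arr t h (i - 1) g
        \<and> (\<forall>xs\<in>lists (incidence_alg n Arr t h). length xs = i \<longrightarrow> hdiff n Arr t h (i - 1) g xs = f xs))"
  proof (cases i)
    case 0
    have "f [] = 0"
    proof (rule deg0)
      show "P (f []) = f []" using vals 0 by simp
      fix x :: "'a mat" assume xA: "x \<in> incidence_alg n Arr t h"
      have "dd f [x] = 0" using cyc[of "[x]"] xA 0 by simp
      then show "la x (f []) - ra (f []) x = 0" by (simp add: dd_def D.simps)
    qed
    then show ?thesis using 0 by simp
  next
    case (Suc m)
    have "hcochain n Arr t h m (HH f)"
      unfolding hcochain_iff using HH_P HH_MLN MLf Suc by auto
    moreover have "hdiff n Arr t h m (HH f) xs = f xs" if "xs \<in> lists (incidence_alg n Arr t h)" "length xs = Suc m" for xs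
      unfolding hdiff_dd[OF that(2)]
      by (rule cobound) (use MLf vals cyc Suc that in auto)
    ultimately show ?thesis using Suc by auto
  qed
qed

end

theorem theorem4p5:
  fixes n :: nat and Arr :: "'q set" and t h :: "'q \<Rightarrow> nat"
  assumes "ordered_quiver n Arr t h"
  shows "\<forall>i. hochschild_vanishes n Arr t h i TYPE('a::comm_ring_1)"
  using iq.main_thm by blast

end
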